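(* Let $a_1,a_2\in\mathbb{R}^2$, let $e$ be a directed segment in $\mathbb{R}^2$ with supporting line $\ell$ (directed as $e$), and let $\rho>0$. Call the monotonicity predicate true if there exist points $p_1,p_2\in\ell$ with $p_1$ not after $p_2$ in the direction of $e$ such that $\|p_1-a_1\|\le\rho$ and $\|p_2-a_2\|\le\rho$. Consider: (d) $\ell$ intersects the circle of radius $\rho$ centered at $a_1$; (e) $\ell$ intersects the circle of radius $\rho$ centered at $a_2$; (f) the angle between the vector $a_2-a_1$ and the direction of $e$ is at most $\pi/2$; (g) $\|a_1-a_2\|\le 2\rho$. If $(d)\wedge(e)\wedge(f)$ is true, then the monotonicity predicate is true. Furthermore, if (g) is false, or if $\ell$ does not intersect the lens formed by the two closed disks of radius $\rho$ centered at $a_1$ and $a_2$ (their intersection), then $(d)\wedge(e)\wedge(f)$ is equivalent to the monotonicity predicate. *)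

theory Defs
  imports "HOL-Analysis.Analysis"
begin

text \<open>Unsigned angle between two vectors, in [0, pi]. (For a zero vector the
  quotient is 0 and the angle is pi/2 by this convention.)\<close>
definition vec_angle :: "real^2 \<Rightarrow> real^2 \<Rightarrow> real" where
  "vec_angle u v = arccos ((u \<bullet> v) / (norm u * norm v))"

definition supp_line :: "real^2 \<Rightarrow> real^2 \<Rightarrow> (real^2) set" where
  "supp_line s t = {s + c *\<^sub>R (t - s) | c. True}"

definition monotone_pred :: "real^2 \<Rightarrow> real^2 \<Rightarrow> real^2 \<Rightarrow> real^2 \<Rightarrow> real \<Rightarrow> bool" where
  "monotone_pred a1 a2 s t \<rho> \<longleftrightarrow>
     (\<exists>p1 \<in> supp_line s t. \<exists>p2 \<in> supp_line s t.
        (p2 - p1) \<bullet> (t - s) \<ge> 0 \<and> norm (p1 - a1) \<le> \<rho> \<and> norm (p2 - a2) \<le> \<rho>)"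

end

theory Submission
  imports Defs
begin

lemma quad_min:
  fixes V B N c :: real
  assumes "V > 0"
  shows "V*(B/V)^2 - 2*B*(B/V) + N \<le> V*c^2 - 2*B*c + N"
proof -
  have "V*c^2 - 2*B*c + N - (V*(B/V)^2 - 2*B*(B/V) + N) = V*(c - B/V)^2"
    using assms by (simp add: field_simps power2_eq_square)
  moreover have "V*(c - B/V)^2 \<ge> 0" using assms by simp
  ultimately show ?thesis by linarith
qed

lemma quad_hit:
  fixes V B N r :: real
  assumes "V > 0" "V*(B/V)^2 - 2*B*(B/V) + N \<le> r^2"
  shows "\<exists>c. V*c^2 - 2*B*c + N = r^2"
proof -
  define m where "m = V*(B/V)^2 - 2*B*(B/V) + N"
  define c where "c = B/V + sqrt ((r^2 - m)/V)"
  have h: "(sqrt ((r^2 - m)/V))^2 = (r^2 - m)/V"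
    using assms by (simp add: m_def)
  have "V*c^2 - 2*B*c + N - m = V*(c - B/V)^2"
    using assms by (simp add: m_def field_simps power2_eq_square)
  also have "\<dots> = r^2 - m" using h assms by (simp add: c_def)
  finally have "V*c^2 - 2*B*c + N = r^2" by simp
  then show ?thesis by blast
qed

lemma quad_mono1:
  fixes V B N a b :: real
  assumes "V > 0" "B/V \<le> a" "a \<le> b"
  shows "V*a^2 - 2*B*a + N \<le> V*b^2 - 2*B*b + N"
proof -
  have "B \<le> V*a" using assms by (simp add: pos_divide_le_eq mult.commute)
  moreover have "V*a \<le> V*b" using assms by (simp add: mult_left_mono)
  ultimately have "0 \<le> V*(a+b) - 2*B" by (simp add: algebra_simps)
  then have "0 \<le> (b-a)*(V*(a+b) - 2*B)" using assms by simp
  then show ?thesis by (simp add: algebra_simps power2_eq_square)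
qed

lemma quad_mono2:
  fixes V B N a b :: real
  assumes "V > 0" "a \<le> B/V" "b \<le> a"
  shows "V*a^2 - 2*B*a + N \<le> V*b^2 - 2*B*b + N"
proof -
  have "V*a \<le> B" using assms by (simp add: pos_le_divide_eq mult.commute)
  moreover have "V*b \<le> V*a" using assms by (simp add: mult_left_mono)
  ultimately have "V*(a+b) - 2*B \<le> 0" by (simp add: algebra_simps)
  then have "0 \<le> (a-b)*(2*B - V*(a+b))" using assms by simp
  then show ?thesis by (simp add: algebra_simps power2_eq_square)
qed

theorem mainTheorem7:
  fixes a1 a2 s t :: "real^2" and \<rho> :: real
  assumes "s \<noteq> t" and "\<rho> > 0"
  defines "d \<equiv> supp_line s t \<inter> sphere a1 \<rho> \<noteq> {}"
      and "e \<equiv> supp_line s t \<inter> sphere a2 \<rho> \<noteq> {}"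
      and "f \<equiv> vec_angle (a2 - a1) (t - s) \<le> pi / 2"
      and "g \<equiv> norm (a1 - a2) \<le> 2 * \<rho>"
  shows "(d \<and> e \<and> f \<longrightarrow> monotone_pred a1 a2 s t \<rho>) \<and>
         ((\<not> g \<or> supp_line s t \<inter> (cball a1 \<rho> \<inter> cball a2 \<rho>) = {}) \<longrightarrow>
            ((d \<and> e \<and> f) \<longleftrightarrow> monotone_pred a1 a2 s t \<rho>))"
proof -
  define v where "v = t - s"
  define V where "V = v \<bullet> v"
  have Vpos: "V > 0" using assms(1) by (simp add: V_def v_def)
  define Q where "Q a c = V*c^2 - 2*((a-s)\<bullet>v)*c + (norm (a-s))^2" for a c
  have line: "\<And>p. p \<in> supp_line s t \<longleftrightarrow> (\<exists>c. p = s + c *\<^sub>R v)"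
    by (auto simp: supp_line_def v_def)
  have nrm: "(norm (s + c *\<^sub>R v - a))^2 = Q a c" for a c
  proof -
    have "s + c *\<^sub>R v - a = c *\<^sub>R v - (a - s)" by simp
    then show ?thesis
      by (simp only: power2_norm_eq_inner Q_def V_def)
         (simp add: inner_diff_left inner_diff_right inner_commute algebra_simps power2_eq_square)
  qed
  have ball_iff: "norm (s + c *\<^sub>R v - a) \<le> \<rho> \<longleftrightarrow> Q a c \<le> \<rho>^2" for a c
    using nrm[of c a] assms(2) abs_le_square_iff[of "norm (s + c *\<^sub>R v - a)" \<rho>] by simp
  have sph_iff: "norm (s + c *\<^sub>R v - a) = \<rho> \<longleftrightarrow> Q a c = \<rho>^2" for a c
    using nrm[of c a] assms(2) power2_eq_iff_nonneg[of "norm (s + c *\<^sub>R v - a)" \<rho>] by simp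
  have qmin: "Q a (((a-s)\<bullet>v)/V) \<le> Q a c" for a c
    unfolding Q_def using quad_min[OF Vpos] by blast
  have sph_gen: "(supp_line s t \<inter> sphere a \<rho> \<noteq> {}) \<longleftrightarrow> Q a (((a-s)\<bullet>v)/V) \<le> \<rho>^2" for a
  proof
    assume "supp_line s t \<inter> sphere a \<rho> \<noteq> {}"
    then obtain p where p: "p \<in> supp_line s t" "p \<in> sphere a \<rho>" by blast
    then obtain c where "p = s + c *\<^sub>R v" using line by blast
    then have "norm (a - (s + c *\<^sub>R v)) = \<rho>" using p(2) by (simp add: dist_norm)
    then have "Q a c = \<rho>^2" using sph_iff by (simp add: norm_minus_commute)
    then show "Q a (((a-s)\<bullet>v)/V) \<le> \<rho>^2" using qmin[of a c] by simp
  next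
    assume "Q a (((a-s)\<bullet>v)/V) \<le> \<rho>^2"
    then obtain c where "Q a c = \<rho>^2" using quad_hit[OF Vpos] unfolding Q_def by blast
    then have "norm (a - (s + c *\<^sub>R v)) = \<rho>" using sph_iff by (simp add: norm_minus_commute)
    then have "s + c *\<^sub>R v \<in> supp_line s t \<inter> sphere a \<rho>" by (auto simp: line dist_norm)
    then show "supp_line s t \<inter> sphere a \<rho> \<noteq> {}" by blast
  qed
  define B1 where "B1 = (a1-s)\<bullet>v"
  define B2 where "B2 = (a2-s)\<bullet>v"
  have dB: "(a2 - a1) \<bullet> v = B2 - B1"
    by (simp add: B1_def B2_def inner_diff_left)
  have d_iff: "d \<longleftrightarrow> Q a1 (B1/V) \<le> \<rho>^2" using sph_gen[of a1] by (simp add: d_def B1_def)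
  have e_iff: "e \<longleftrightarrow> Q a2 (B2/V) \<le> \<rho>^2" using sph_gen[of a2] by (simp add: e_def B2_def)
  have f_iff: "f \<longleftrightarrow> B1 \<le> B2"
  proof -
    define x where "x = ((a2 - a1) \<bullet> v) / (norm (a2 - a1) * norm v)"
    have cs: "\<bar>(a2 - a1) \<bullet> v\<bar> \<le> norm (a2 - a1) * norm v" by (rule Cauchy_Schwarz_ineq2)
    have x1: "-1 \<le> x" "x \<le> 1"
    proof -
      have "\<bar>x\<bar> \<le> 1"
      proof (cases "norm (a2 - a1) * norm v = 0")
        case True then show ?thesis unfolding x_def True by simp
      next
        case False
        then have "norm (a2 - a1) * norm v > 0" by (simp add: less_le)
        then show ?thesis using cs by (simp add: x_def abs_divide pos_divide_le_eq)
      qed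
      then show "-1 \<le> x" "x \<le> 1" by auto
    qed
    have "f \<longleftrightarrow> arccos x \<le> arccos 0" by (simp add: f_def vec_angle_def x_def v_def)
    also have "\<dots> \<longleftrightarrow> 0 \<le> x" using x1 arccos_le_mono[of x 0] by simp
    also have "\<dots> \<longleftrightarrow> 0 \<le> (a2 - a1) \<bullet> v"
    proof (cases "a2 = a1")
      case True then show ?thesis by (simp add: x_def)
    next
      case False
      then have "norm (a2 - a1) * norm v > 0" using assms(1) by (simp add: v_def)
      then show ?thesis by (simp add: x_def zero_le_divide_iff)
    qed
    finally show ?thesis using dB by simp
  qed
  have mono_iff: "monotone_pred a1 a2 s t \<rho> \<longleftrightarrow> (\<exists>x y. x \<le> y \<and> Q a1 x \<le> \<rho>^2 \<and> Q a2 y \<le> \<rho>^2)"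
  proof
    assume "monotone_pred a1 a2 s t \<rho>"
    then obtain x y where xy: "((s + y *\<^sub>R v) - (s + x *\<^sub>R v)) \<bullet> v \<ge> 0"
       "norm (s + x *\<^sub>R v - a1) \<le> \<rho>" "norm (s + y *\<^sub>R v - a2) \<le> \<rho>"
    proof -
      obtain p1 p2 where pp: "p1 \<in> supp_line s t" "p2 \<in> supp_line s t"
        "(p2 - p1) \<bullet> v \<ge> 0" "norm (p1 - a1) \<le> \<rho>" "norm (p2 - a2) \<le> \<rho>"
        using \<open>monotone_pred a1 a2 s t \<rho>\<close> unfolding monotone_pred_def v_def by blast
      obtain x where "p1 = s + x *\<^sub>R v" using pp(1) line by blast
      moreover obtain y where "p2 = s + y *\<^sub>R v" using pp(2) line by blast
      ultimately show ?thesis using pp that by blast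
    qed
    have "((s + y *\<^sub>R v) - (s + x *\<^sub>R v)) \<bullet> v = (y - x) * V"
      by (simp add: V_def algebra_simps inner_diff_left)
    then have "x \<le> y" using xy(1) Vpos by (simp add: zero_le_mult_iff)
    then show "\<exists>x y. x \<le> y \<and> Q a1 x \<le> \<rho>^2 \<and> Q a2 y \<le> \<rho>^2" using xy ball_iff by blast
  next
    assume "\<exists>x y. x \<le> y \<and> Q a1 x \<le> \<rho>^2 \<and> Q a2 y \<le> \<rho>^2"
    then obtain x y where xy: "x \<le> y" "Q a1 x \<le> \<rho>^2" "Q a2 y \<le> \<rho>^2" by blast
    have "((s + y *\<^sub>R v) - (s + x *\<^sub>R v)) \<bullet> v = (y - x) * V"
      by (simp add: V_def algebra_simps inner_diff_left)
    then have "((s + y *\<^sub>R v) - (s + x *\<^sub>R v)) \<bullet> (t - s) \<ge> 0" using xy(1) Vpos by (simp add: v_def)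
    moreover have "s + x *\<^sub>R v \<in> supp_line s t" "s + y *\<^sub>R v \<in> supp_line s t"
      using line by blast+
    moreover have "norm (s + x *\<^sub>R v - a1) \<le> \<rho>" "norm (s + y *\<^sub>R v - a2) \<le> \<rho>"
      using xy ball_iff by blast+
    ultimately show "monotone_pred a1 a2 s t \<rho>" unfolding monotone_pred_def by blast
  qed
  have part1: "d \<and> e \<and> f \<longrightarrow> monotone_pred a1 a2 s t \<rho>"
  proof
    assume "d \<and> e \<and> f"
    then have "B1/V \<le> B2/V" "Q a1 (B1/V) \<le> \<rho>^2" "Q a2 (B2/V) \<le> \<rho>^2"
      using d_iff e_iff f_iff Vpos by (auto simp: divide_right_mono)
    then show "monotone_pred a1 a2 s t \<rho>" using mono_iff by blast
  qed
  have part2: "monotone_pred a1 a2 s t \<rho> \<Longrightarrow> \<not> (d \<and> e \<and> f) \<Longrightarrow>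
      g \<and> supp_line s t \<inter> (cball a1 \<rho> \<inter> cball a2 \<rho>) \<noteq> {}"
  proof -
    assume m: "monotone_pred a1 a2 s t \<rho>" and n: "\<not> (d \<and> e \<and> f)"
    then obtain x y where xy: "x \<le> y" "Q a1 x \<le> \<rho>^2" "Q a2 y \<le> \<rho>^2" using mono_iff by blast
    have d: d using qmin[of a1 x] xy d_iff by (simp add: B1_def)
    have e: e using qmin[of a2 y] xy e_iff by (simp add: B2_def)
    have "\<not> f" using n d e by blast
    then have lt: "B2 < B1" using f_iff by simp
    then have lt': "B2/V < B1/V" using Vpos by (simp add: divide_strict_right_mono)
    have q1: "Q a1 c = V*c^2 - 2*B1*c + (norm (a1-s))^2" for c by (simp add: Q_def B1_def)
    have q2: "Q a2 c = V*c^2 - 2*B2*c + (norm (a2-s))^2" for c by (simp add: Q_def B2_def)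
    obtain z where z: "Q a1 z \<le> \<rho>^2" "Q a2 z \<le> \<rho>^2"
    proof (cases "y \<le> B1/V")
      case True
      have "Q a1 y \<le> Q a1 x" unfolding q1 by (rule quad_mono2[OF Vpos True xy(1)])
      then show ?thesis using that[of y] xy by simp
    next
      case yc: False
      show ?thesis
      proof (cases "B2/V \<le> x")
        case True
        have "Q a2 x \<le> Q a2 y" unfolding q2 by (rule quad_mono1[OF Vpos True xy(1)])
        then show ?thesis using that[of x] xy by simp
      next
        case False
        have "Q a1 (B1/V) \<le> \<rho>^2" using qmin[of a1 x] xy by (simp add: B1_def)
        moreover have "Q a2 (B1/V) \<le> Q a2 y" unfolding q2
          using quad_mono1[OF Vpos, of B2 "B1/V" y] lt' yc by simp
        ultimately show ?thesis using that[of "B1/V"] xy by simp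
      qed
    qed
    define p where "p = s + z *\<^sub>R v"
    have p1: "norm (p - a1) \<le> \<rho>" "norm (p - a2) \<le> \<rho>" using z ball_iff by (auto simp: p_def)
    have "p \<in> supp_line s t \<inter> (cball a1 \<rho> \<inter> cball a2 \<rho>)"
      using p1 by (auto simp: line p_def dist_norm norm_minus_commute)
    moreover have g
    proof -
      have "norm (a1 - a2) \<le> norm (a1 - p) + norm (p - a2)" by (rule norm_diff_triangle_le[of _ p]) simp_all
      then show g using p1 by (simp add: g_def norm_minus_commute)
    qed
    ultimately show ?thesis by blast
  qed
  show ?thesis using part1 part2 by blast
qed

end
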